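(* Let $(N,\langle\cdot,\cdot\rangle)$ be a 2-step nilpotent Lie group with a left-invariant Riemannian metric and Lie algebra $\mathfrak n$. Suppose that either $\mathfrak n$ is non-singular, or $\mathfrak n$ has no Euclidean factor (i.e. $\ker j=\{0\}$) and is almost non-singular. Then every left-invariant skew-symmetric $(1,1)$-tensor $F$ on $N$ of type I whose associated 2-form $\omega=\langle F\cdot,\cdot\rangle$ is closed and which is parallel ($\nabla F=0$, $\nabla$ the Levi-Civita connection) is identically zero.
   Context: A real Lie algebra is 2-step nilpotent if $[[U,V],W]=0$ for all $U,V,W$. Let $\mathfrak z$ be the center, $\mathfrak v=\mathfrak z^\perp$, and for $Z\in\mathfrak z$ define $j_Z:\mathfrak v\to\mathfrak v$ by $\langle j_ZV,W\rangle=\langle Z,[V,W]\rangle$; $j:\mathfrak z\to\mathfrak{so}(\mathfrak v)$ is linear with kernel $\ker j$. $\mathfrak n$ is non-singular if $\mathrm{ad}(X):\mathfrak n\to\mathfrak z$ is onto for every $X\notin\mathfrak z$ (equivalently $j_Z$ is invertible for every $Z\neq0$); it is almost non-singular if there exist $Z,\tilde Z\in\mathfrak z$ with $j_Z$ invertible and $j_{\tilde Z}$ singular. $F$ (identified with a skew-symmetric endomorphism of $\mathfrak n$) is of type I if $F(\mathfrak v)\subseteq\mathfrak v$ and $F(\mathfrak z)\subseteq\mathfrak z$. Closedness of a left-invariant 2-form means $\omega([U,V],W)+\omega([V,W],U)+\omega([W,U],V)=0$ for all $U,V,W\in\mathfrak n$. *)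

theory Defs
  imports "HOL-Analysis.Analysis"
begin

text \<open>A metric Lie algebra is modelled as a Euclidean space (finite-dimensional real
inner product space) with a bracket br.\<close>

definition two_step_nilpotent :: "('a::euclidean_space \<Rightarrow> 'a \<Rightarrow> 'a) \<Rightarrow> bool" where
  "two_step_nilpotent br \<longleftrightarrow>
     bilinear br \<and> (\<forall>U V. br U V = - br V U) \<and>
     (\<forall>U V W. br (br U V) W = 0) \<and> (\<exists>U V. br U V \<noteq> 0)"

definition center :: "('a::euclidean_space \<Rightarrow> 'a \<Rightarrow> 'a) \<Rightarrow> 'a set" where
  "center br = {Z. \<forall>X. br Z X = 0}"

definition vpart :: "('a::euclidean_space \<Rightarrow> 'a \<Rightarrow> 'a) \<Rightarrow> 'a set" where
  "vpart br = {V. \<forall>Z\<in>center br. inner V Z = 0}"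

text \<open>j_Z V is the vector with inner (j_Z V) W = inner Z (br V W) for all W.\<close>
definition jmap :: "('a::euclidean_space \<Rightarrow> 'a \<Rightarrow> 'a) \<Rightarrow> 'a \<Rightarrow> 'a \<Rightarrow> 'a" where
  "jmap br Z V = (\<Sum>b\<in>Basis. inner Z (br V b) *\<^sub>R b)"

definition non_singular :: "('a::euclidean_space \<Rightarrow> 'a \<Rightarrow> 'a) \<Rightarrow> bool" where
  "non_singular br \<longleftrightarrow> (\<forall>X. X \<notin> center br \<longrightarrow> center br \<subseteq> range (br X))"

definition almost_non_singular :: "('a::euclidean_space \<Rightarrow> 'a \<Rightarrow> 'a) \<Rightarrow> bool" where
  "almost_non_singular br \<longleftrightarrow>
     (\<exists>Z\<in>center br. \<exists>Z'\<in>center br.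
        bij_betw (jmap br Z) (vpart br) (vpart br) \<and>
        \<not> bij_betw (jmap br Z') (vpart br) (vpart br))"

definition no_euclidean_factor :: "('a::euclidean_space \<Rightarrow> 'a \<Rightarrow> 'a) \<Rightarrow> bool" where
  "no_euclidean_factor br \<longleftrightarrow>
     (\<forall>Z\<in>center br. (\<forall>V\<in>vpart br. jmap br Z V = 0) \<longrightarrow> Z = 0)"

text \<open>Levi-Civita connection on left-invariant vector fields (Koszul formula).\<close>
definition lc_conn :: "('a::euclidean_space \<Rightarrow> 'a \<Rightarrow> 'a) \<Rightarrow> 'a \<Rightarrow> 'a \<Rightarrow> 'a" where
  "lc_conn br X Y = (\<Sum>b\<in>Basis.
      ((inner (br X Y) b - inner (br Y b) X + inner (br b X) Y) / 2) *\<^sub>R b)"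

definition skew_endo :: "('a::euclidean_space \<Rightarrow> 'a) \<Rightarrow> bool" where
  "skew_endo F \<longleftrightarrow> linear F \<and> (\<forall>X Y. inner (F X) Y = - inner X (F Y))"

definition type_I :: "('a::euclidean_space \<Rightarrow> 'a \<Rightarrow> 'a) \<Rightarrow> ('a \<Rightarrow> 'a) \<Rightarrow> bool" where
  "type_I br F \<longleftrightarrow> F ` vpart br \<subseteq> vpart br \<and> F ` center br \<subseteq> center br"

definition closed_form :: "('a::euclidean_space \<Rightarrow> 'a \<Rightarrow> 'a) \<Rightarrow> ('a \<Rightarrow> 'a \<Rightarrow> real) \<Rightarrow> bool" where
  "closed_form br \<omega> \<longleftrightarrow>
     (\<forall>U V W. \<omega> (br U V) W + \<omega> (br V W) U + \<omega> (br W U) V = 0)"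

definition parallel :: "('a::euclidean_space \<Rightarrow> 'a \<Rightarrow> 'a) \<Rightarrow> ('a \<Rightarrow> 'a) \<Rightarrow> bool" where
  "parallel br F \<longleftrightarrow> (\<forall>X Y. lc_conn br X (F Y) - F (lc_conn br X Y) = 0)"

end

theory Submission
  imports Defs
begin

lemma br_facts:
  assumes "bilinear br"
  shows "br (x + y) z = br x z + br y z" "br x (y + z) = br x y + br x z"
    "br (c *\<^sub>R x) z = c *\<^sub>R br x z" "br x (c *\<^sub>R z) = c *\<^sub>R br x z"
  using assms unfolding bilinear_def linear_iff by auto

lemma koszul:
  fixes br :: "'a::euclidean_space \<Rightarrow> 'a \<Rightarrow> 'a"
  assumes bl: "bilinear br"
  shows "inner (lc_conn br X Y) W =
     (inner (br X Y) W - inner (br Y W) X + inner (br W X) Y) / 2"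
proof -
  define g where "g b = (inner (br X Y) b - inner (br Y b) X + inner (br b X) Y) / 2" for b
  have lin: "linear g"
    unfolding linear_iff g_def using br_facts[OF bl]
    by (auto simp: inner_add_left inner_add_right algebra_simps add_divide_distrib diff_divide_distrib)
  have "inner (lc_conn br X Y) W = (\<Sum>b\<in>Basis. g b * inner b W)"
    unfolding lc_conn_def g_def by (simp add: inner_sum_left)
  also have "\<dots> = (\<Sum>b\<in>Basis. inner W b * g b)" by (simp add: inner_commute mult.commute)
  also have "\<dots> = g (\<Sum>b\<in>Basis. inner W b *\<^sub>R b)"
    by (simp add: linear_sum[OF lin] linear_scale[OF lin])
  also have "\<dots> = g W" by (simp add: euclidean_representation)
  finally show ?thesis by (simp add: g_def)
qed

theorem mainTheorem5:
  fixes br :: "'a::euclidean_space \<Rightarrow> 'a \<Rightarrow> 'a" and F :: "'a \<Rightarrow> 'a"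
  assumes "two_step_nilpotent br"
    and "non_singular br \<or> (no_euclidean_factor br \<and> almost_non_singular br)"
    and "skew_endo F"
    and "type_I br F"
    and "closed_form br (\<lambda>U V. inner (F U) V)"
    and "parallel br F"
  shows "F = (\<lambda>X. 0)"
proof -
  have bl: "bilinear br" and sk: "\<And>U V. br U V = - br V U"
    and nil: "\<And>U V W. br (br U V) W = 0" and ex: "\<exists>U V. br U V \<noteq> 0"
    using assms(1) unfolding two_step_nilpotent_def by blast+
  have linF: "linear F" and skF: "\<And>X Y. inner (F X) Y = - inner X (F Y)"
    using assms(3) unfolding skew_endo_def by auto
  have F0: "F 0 = 0" using linF by (rule linear_0)
  have FC: "\<And>Z. Z \<in> center br \<Longrightarrow> F Z \<in> center br"
    using assms(4) unfolding type_I_def by auto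
  have cl: "\<And>U V W. inner (F (br U V)) W + inner (F (br V W)) U + inner (F (br W U)) V = 0"
    using assms(5) unfolding closed_form_def by auto
  have br0l: "\<And>X. br 0 X = 0" using bl by (simp add: bilinear_lzero)
  have brC: "\<And>U V. br U V \<in> center br" using nil unfolding center_def by auto
  have Cl: "\<And>Z X. Z \<in> center br \<Longrightarrow> br Z X = 0" unfolding center_def by auto
  have Cr: "\<And>Z X. Z \<in> center br \<Longrightarrow> br X Z = 0"
  proof -
    fix Z X assume "Z \<in> center br"
    then have "br Z X = 0" by (rule Cl)
    then show "br X Z = 0" using sk[of X Z] by simp
  qed
  have P: "\<And>X Y W. inner (br X (F Y)) W - inner (br (F Y) W) X + inner (br W X) (F Y)
      = - (inner (br X Y) (F W) - inner (br Y (F W)) X + inner (br (F W) X) Y)"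
  proof -
    fix X Y W
    have "lc_conn br X (F Y) = F (lc_conn br X Y)"
      using assms(6) unfolding parallel_def by auto
    hence "inner (lc_conn br X (F Y)) W = - inner (lc_conn br X Y) (F W)"
      using skF by simp
    thus "?thesis X Y W" by (simp add: koszul[OF bl] field_simps)
  qed
  have Fbr: "\<And>U V. F (br U V) = 0"
  proof -
    fix U V
    have "F (br U V) \<in> center br" using FC brC by auto
    with cl[of U V "F (br U V)"] show "F (br U V) = 0"
      by (simp add: Cl Cr F0)
  qed
  have FYC: "\<And>Y. F Y \<in> center br"
  proof -
    fix Y
    have "\<And>X. br X (F Y) = 0"
    proof -
      fix X
      have "inner (br X (F Y)) (br X (F Y)) = - inner (br X Y) (F (br X (F Y)))"
        using P[of X Y "br X (F Y)"] brC FC by (simp add: Cl Cr F0)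
      also have "\<dots> = inner (F (br X Y)) (br X (F Y))" using skF by simp
      also have "\<dots> = 0" using Fbr by simp
      finally show "br X (F Y) = 0" by simp
    qed
    thus "F Y \<in> center br" unfolding center_def
    proof (intro CollectI allI)
      fix X assume "\<And>X. br X (F Y) = 0"
      then show "br (F Y) X = 0" using sk[of "F Y" X] by simp
    qed
  qed
  have orth: "\<And>Y W X. inner (br W X) (F Y) = 0"
  proof -
    fix Y W X
    have "inner (br W X) (F Y) = - inner (br X Y) (F W)"
      using P[of X Y W] FYC by (simp add: Cl Cr)
    also have "\<dots> = inner (F (br X Y)) W" using skF by simp
    finally show "inner (br W X) (F Y) = 0" using Fbr by simp
  qed
  show ?thesis
  proof
    fix Y
    show "F Y = 0"
      using assms(2)
    proof
      assume ns: "non_singular br"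
      obtain U V where UV: "br U V \<noteq> 0" using ex by auto
      have "U \<notin> center br" using UV Cl by auto
      hence "center br \<subseteq> range (br U)" using ns unfolding non_singular_def by auto
      then obtain T where "F Y = br U T" using FYC by blast
      have o: "inner (br U T) (F Y) = 0" by (rule orth)
      hence "inner (F Y) (F Y) = 0" using \<open>F Y = br U T\<close> by metis
      thus "F Y = 0" by simp
    next
      assume "no_euclidean_factor br \<and> almost_non_singular br"
      hence ne: "no_euclidean_factor br" by simp
      have "\<And>V. jmap br (F Y) V = 0"
        unfolding jmap_def using orth by (simp add: inner_commute)
      thus "F Y = 0" using ne FYC unfolding no_euclidean_factor_def by auto
    qed
  qed
qed

end
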